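(* Let $W$ be an sc-Banach space, $E=\mathbb R^n\oplus W$ and $C=[0,\infty)^n\oplus W$. If a finite-dimensional subspace $N\subset E$ is neat with respect to $C$, then $N$ is in good position to $C$ and $C\cap N$ is a partial quadrant in $N$.
   Context: An sc-Banach space is a Banach space $W$ with a nested sequence of Banach spaces $W=W_0\supset W_1\supset\cdots$ with compact inclusions $W_n\to W_m$ ($m<n$) and $\bigcap W_m$ dense in each $W_m$; $E=\mathbb R^n\oplus W$ has levels $\mathbb R^n\oplus W_m$, and $\|\cdot\|$ is its level-$0$ norm. An sc-complement of a closed subspace $N$ is a closed subspace $N^\perp$ with $E_m=(N\cap E_m)\oplus(N^\perp\cap E_m)$ topologically for every $m$, both being sc-subspaces (i.e. their intersections with the levels form sc-structures). A finite-dimensional subspace $N$ is neat with respect to $C$ if it has an sc-complement $N^\perp$ with $N^\perp\subset C$. $N$ is in good position to $C$ if $N\cap C$ has nonempty interior in $N$ and there exist an sc-complement $N^\perp$ and $c>0$ such that for $(n,m)\in N\oplus N^\perp$ with $\|m\|\le c\|n\|$: $n+m\in C$ iff $n\in C$. A partial quadrant in a finite-dimensional space $N$ is the image of $[0,\infty)^k\oplus\mathbb R^{d-k}$ under a linear isomorphism $\mathbb R^d\to N$. *)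

theory Defs
  imports "HOL-Analysis.Analysis"
begin

definition norm_on :: "'w::real_vector set \<Rightarrow> ('w \<Rightarrow> real) \<Rightarrow> bool" where
  "norm_on S p \<longleftrightarrow> subspace S \<and>
     (\<forall>x\<in>S. 0 \<le> p x \<and> (p x = 0 \<longleftrightarrow> x = 0)) \<and>
     (\<forall>x\<in>S. \<forall>y\<in>S. p (x + y) \<le> p x + p y) \<and>
     (\<forall>a. \<forall>x\<in>S. p (a *\<^sub>R x) = \<bar>a\<bar> * p x)"

definition banach_on :: "'w::real_vector set \<Rightarrow> ('w \<Rightarrow> real) \<Rightarrow> bool" where
  "banach_on S p \<longleftrightarrow> norm_on S p \<and>
     (\<forall>X. (\<forall>k. X k \<in> S) \<and> (\<forall>e>0. \<exists>M::nat. \<forall>i\<ge>M. \<forall>j\<ge>M. p (X i - X j) < e)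
          \<longrightarrow> (\<exists>x\<in>S. \<forall>e>0. \<exists>M::nat. \<forall>i\<ge>M. p (X i - x) < e))"

definition sc_banach :: "(nat \<Rightarrow> 'w::banach set) \<Rightarrow> (nat \<Rightarrow> 'w \<Rightarrow> real) \<Rightarrow> bool" where
  "sc_banach Wl nrm \<longleftrightarrow>
     Wl 0 = UNIV \<and> nrm 0 = norm \<and>
     (\<forall>m. banach_on (Wl m) (nrm m)) \<and>
     (\<forall>m. Wl (Suc m) \<subseteq> Wl m) \<and>
     (\<forall>m n. m < n \<longrightarrow>
        (\<forall>X::nat\<Rightarrow>'w. (\<forall>k. X k \<in> Wl n) \<and> (\<exists>B. \<forall>k. nrm n (X k) \<le> B) \<longrightarrow>
           (\<exists>r x. strict_mono r \<and> x \<in> Wl m \<and>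
               (\<forall>e>0. \<exists>M::nat. \<forall>i\<ge>M. nrm m (X (r i) - x) < e)))) \<and>
     (\<forall>m. \<forall>x\<in>Wl m. \<forall>e>0. \<exists>y\<in>(\<Inter>k. Wl k). nrm m (x - y) < e)"

definition El :: "(nat \<Rightarrow> 'w::banach set) \<Rightarrow> nat \<Rightarrow> ((real^'n) \<times> 'w) set" where
  "El Wl m = {z. snd z \<in> Wl m}"

definition nrmE :: "(nat \<Rightarrow> 'w::banach \<Rightarrow> real) \<Rightarrow> nat \<Rightarrow> ((real^'n) \<times> 'w) \<Rightarrow> real" where
  "nrmE nrm m z = sqrt ((norm (fst z))\<^sup>2 + (nrm m (snd z))\<^sup>2)"

definition quadC :: "((real^'n) \<times> 'w::banach) set" where
  "quadC = {z. \<forall>i. 0 \<le> fst z $ i}"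

definition closed_level ::
  "(nat \<Rightarrow> 'w::banach set) \<Rightarrow> (nat \<Rightarrow> 'w \<Rightarrow> real) \<Rightarrow> nat \<Rightarrow> ((real^'n) \<times> 'w) set \<Rightarrow> bool" where
  "closed_level Wl nrm m F \<longleftrightarrow>
     (\<forall>X z. (\<forall>k. X k \<in> F \<inter> El Wl m) \<and> z \<in> El Wl m \<and>
            (\<forall>e>0. \<exists>M::nat. \<forall>i\<ge>M. nrmE nrm m (X i - z) < e) \<longrightarrow> z \<in> F)"

definition sc_subspace ::
  "(nat \<Rightarrow> 'w::banach set) \<Rightarrow> (nat \<Rightarrow> 'w \<Rightarrow> real) \<Rightarrow> ((real^'n) \<times> 'w) set \<Rightarrow> bool" where
  "sc_subspace Wl nrm F \<longleftrightarrow> subspace F \<and> closed F \<and>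
     (\<forall>m. closed_level Wl nrm m F) \<and>
     (\<forall>m. \<forall>z\<in>F \<inter> El Wl m. \<forall>e>0. \<exists>y\<in>F \<inter> (\<Inter>k. El Wl k). nrmE nrm m (z - y) < e)"

text \<open>S = A \<oplus> B topologically w.r.t. the norm p (bounded projection).\<close>
definition top_direct_sum :: "'a::real_vector set \<Rightarrow> 'a set \<Rightarrow> 'a set \<Rightarrow> ('a \<Rightarrow> real) \<Rightarrow> bool" where
  "top_direct_sum S A B p \<longleftrightarrow> subspace A \<and> subspace B \<and> A \<subseteq> S \<and> B \<subseteq> S \<and>
     (\<forall>z\<in>S. \<exists>!ab. fst ab \<in> A \<and> snd ab \<in> B \<and> z = fst ab + snd ab) \<and>
     (\<exists>K. \<forall>a\<in>A. \<forall>b\<in>B. p a \<le> K * p (a + b))"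

definition sc_complement ::
  "(nat \<Rightarrow> 'w::banach set) \<Rightarrow> (nat \<Rightarrow> 'w \<Rightarrow> real) \<Rightarrow> ((real^'n) \<times> 'w) set \<Rightarrow> ((real^'n) \<times> 'w) set \<Rightarrow> bool" where
  "sc_complement Wl nrm N M \<longleftrightarrow> closed N \<and> closed M \<and> subspace N \<and> subspace M \<and>
     sc_subspace Wl nrm N \<and> sc_subspace Wl nrm M \<and>
     (\<forall>m. top_direct_sum (El Wl m) (N \<inter> El Wl m) (M \<inter> El Wl m) (nrmE nrm m))"

definition neat ::
  "(nat \<Rightarrow> 'w::banach set) \<Rightarrow> (nat \<Rightarrow> 'w \<Rightarrow> real) \<Rightarrow> ((real^'n) \<times> 'w) set \<Rightarrow> ((real^'n) \<times> 'w) set \<Rightarrow> bool" where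
  "neat Wl nrm N C \<longleftrightarrow> (\<exists>M. sc_complement Wl nrm N M \<and> M \<subseteq> C)"

definition good_position ::
  "(nat \<Rightarrow> 'w::banach set) \<Rightarrow> (nat \<Rightarrow> 'w \<Rightarrow> real) \<Rightarrow> ((real^'n) \<times> 'w) set \<Rightarrow> ((real^'n) \<times> 'w) set \<Rightarrow> bool" where
  "good_position Wl nrm N C \<longleftrightarrow>
     (\<exists>U. openin (top_of_set N) U \<and> U \<noteq> {} \<and> U \<subseteq> N \<inter> C) \<and>
     (\<exists>M c. sc_complement Wl nrm N M \<and> c > 0 \<and>
        (\<forall>a\<in>N. \<forall>b\<in>M. norm b \<le> c * norm a \<longrightarrow> (a + b \<in> C \<longleftrightarrow> a \<in> C)))"

text \<open>R^d modelled as functions nat \<Rightarrow> real vanishing from index d on.\<close>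
definition Rd :: "nat \<Rightarrow> (nat \<Rightarrow> real) set" where
  "Rd d = {t. \<forall>i\<ge>d. t i = 0}"

definition partial_quadrant :: "'a::real_vector set \<Rightarrow> 'a set \<Rightarrow> bool" where
  "partial_quadrant N Q \<longleftrightarrow> (\<exists>d k L. k \<le> d \<and>
     (\<forall>s\<in>Rd d. \<forall>t\<in>Rd d. L (\<lambda>i. s i + t i) = L s + L t) \<and>
     (\<forall>a. \<forall>t\<in>Rd d. L (\<lambda>i. a * t i) = a *\<^sub>R L t) \<and>
     inj_on L (Rd d) \<and> L ` Rd d = N \<and>
     L ` {t\<in>Rd d. \<forall>i<k. 0 \<le> t i} = Q)"

end

theory Submission
  imports Defs
begin

lemma sum_axis_comp:
  fixes h :: "nat \<Rightarrow> 'n::finite" and c :: "nat \<Rightarrow> real"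
  assumes "inj_on h {..<n}" "i < n"
  shows "(\<Sum>i'<n. c i' *\<^sub>R (axis (h i') 1 :: real^'n)) $ h i = c i"
proof -
  have "(\<Sum>i'<n. c i' *\<^sub>R (axis (h i') 1 :: real^'n)) $ h i = (\<Sum>i'<n. c i' * (if h i = h i' then 1 else 0))"
    by (simp add: axis_def)
  also have "\<dots> = (\<Sum>i'<n. if i' = i then c i else 0)"
    apply (rule sum.cong, simp)
    using assms by (auto simp: inj_on_def)
  also have "\<dots> = c i" using assms by simp
  finally show ?thesis .
qed

theorem proposition6p2:
  fixes Wl :: "nat \<Rightarrow> 'w::banach set" and nrm :: "nat \<Rightarrow> 'w \<Rightarrow> real"
    and N :: "((real^'n) \<times> 'w) set"
  assumes "sc_banach Wl nrm"
    and "subspace N" and "\<exists>B. finite B \<and> span B = N"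
    and "neat Wl nrm N quadC"
  shows "good_position Wl nrm N quadC \<and> partial_quadrant N (quadC \<inter> N)"
proof -
  obtain M where scM: "sc_complement Wl nrm N M" and MC: "M \<subseteq> quadC"
    using assms(4) unfolding neat_def by blast
  have W0: "Wl 0 = UNIV" using assms(1) unfolding sc_banach_def by (elim conjE)
  have subM: "subspace M" using scM unfolding sc_complement_def by (elim conjE)
  have tds: "top_direct_sum (El Wl 0) (N \<inter> El Wl 0) (M \<inter> El Wl 0) (nrmE nrm 0)"
    using scM unfolding sc_complement_def by (elim conjE allE)
  have El0: "El Wl 0 = UNIV" using W0 by (simp add: El_def)
  have decomp: "\<exists>a\<in>N. \<exists>b\<in>M. z = a + b" for z
  proof -
    have "\<forall>z\<in>El Wl 0. \<exists>!ab. fst ab \<in> N \<inter> El Wl 0 \<and> snd ab \<in> M \<inter> El Wl 0 \<and> z = fst ab + snd ab"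
      using tds unfolding top_direct_sum_def by (elim conjE)
    then have "\<exists>!ab. fst ab \<in> N \<inter> El Wl 0 \<and> snd ab \<in> M \<inter> El Wl 0 \<and> z = fst ab + snd ab"
      unfolding El0 by (rule bspec) simp
    then obtain ab where "fst ab \<in> N \<inter> El Wl 0 \<and> snd ab \<in> M \<inter> El Wl 0 \<and> z = fst ab + snd ab"
      by (elim ex1E)
    then show ?thesis by blast
  qed
  have fstM: "fst b = 0" if "b \<in> M" for b
  proof -
    have "-b \<in> M" using subM that by (simp add: subspace_neg)
    then have "\<forall>i. 0 \<le> fst (-b) $ i" "\<forall>i. 0 \<le> fst b $ i" using MC that by (auto simp: quadC_def)
    then show ?thesis by (auto simp: vec_eq_iff intro: order.antisym)
  qed
  have lift: "\<exists>a\<in>N. fst a = x" for x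
  proof -
    obtain a b where "a \<in> N" "b \<in> M" "(x, 0::'w) = a + b" using decomp by blast
    then show ?thesis using fstM[of b] by (metis add.right_neutral fst_add fst_conv)
  qed
  have CN: "a \<in> quadC \<longleftrightarrow> (\<forall>i. 0 \<le> fst a $ i)" for a :: "(real^'n) \<times> 'w"
    by (simp add: quadC_def)
  let ?U = "N \<inter> {z::(real^'n)\<times>'w. \<forall>i. 0 < fst z $ i}"
  have op: "open {z::(real^'n)\<times>'w. \<forall>i. 0 < fst z $ i}"
  proof -
    have eq: "{z::(real^'n)\<times>'w. \<forall>i. 0 < fst z $ i} = (\<Inter>i\<in>UNIV. {z. 0 < fst z $ i})" by auto
    have "open {z::(real^'n)\<times>'w. 0 < fst z $ i}" for i
      by (intro open_Collect_less continuous_intros)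
    then show ?thesis unfolding eq by (intro open_INT) auto
  qed
  have g1: "openin (top_of_set N) ?U" using op by (simp add: openin_open_Int)
  obtain a0 where "a0 \<in> N" "fst a0 = (\<chi> i. 1)" using lift by blast
  then have "a0 \<in> ?U" by simp
  then have g2: "?U \<noteq> {}" by blast
  have g3: "?U \<subseteq> N \<inter> quadC" by (auto simp: quadC_def less_imp_le)
  have g4: "\<forall>a\<in>N. \<forall>b\<in>M. norm b \<le> 1 * norm a \<longrightarrow> (a + b \<in> quadC \<longleftrightarrow> a \<in> quadC)"
  proof (intro ballI impI)
    fix a b assume "a \<in> N" "b \<in> M"
    then have "fst (a + b) = fst a" using fstM by simp
    then show "(a + b \<in> quadC \<longleftrightarrow> a \<in> quadC)" by (simp only: CN)
  qed
  have gp: "good_position Wl nrm N quadC"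
    unfolding good_position_def
  proof (rule conjI)
    show "\<exists>U. openin (top_of_set N) U \<and> U \<noteq> {} \<and> U \<subseteq> N \<inter> quadC"
      using g1 g2 g3 by (intro exI[of _ ?U] conjI)
    show "\<exists>M c. sc_complement Wl nrm N M \<and> 0 < c \<and>
           (\<forall>a\<in>N. \<forall>b\<in>M. norm b \<le> c * norm a \<longrightarrow> (a + b \<in> quadC) = (a \<in> quadC))"
      using scM g4 by (intro exI[of _ M] exI[of _ "1::real"] conjI) simp_all
  qed
  define K where "K = N \<inter> {z. fst z = 0}"
  obtain BK where BK: "BK \<subseteq> K" "independent BK" "K \<subseteq> span BK" "card BK = dim K"
    by (rule basis_exists)
  obtain B0 where B0: "finite B0" "span B0 = N" using assms(3) by blast
  have "BK \<subseteq> span B0" using BK(1) B0(2) by (auto simp: K_def)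
  then have finBK: "finite BK" using independent_span_bound[OF B0(1) BK(2)] by blast
  define m where "m = card BK"
  obtain g where g: "bij_betw g {0..<m} BK" using ex_bij_betw_nat_finite[OF finBK] unfolding m_def by (elim exE)
  define n where "n = CARD('n)"
  obtain h :: "nat \<Rightarrow> 'n" where h: "bij_betw h {0..<n} UNIV"
    using ex_bij_betw_nat_finite[of "UNIV::'n set", OF finite] unfolding n_def by (elim exE)
  define A where "A j = (SOME a. a \<in> N \<and> fst a = axis j (1::real))" for j :: 'n
  have A: "A j \<in> N \<and> fst (A j) = axis j 1" for j
  proof -
    have "\<exists>a. a \<in> N \<and> fst a = axis j (1::real)" using lift[of "axis j 1"] by blast
    then show ?thesis unfolding A_def by (rule someI_ex)
  qed
  then have A: "A j \<in> N" "fst (A j) = axis j 1" for j by auto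
  define L where "L t = (\<Sum>i<n. t i *\<^sub>R A (h i)) + (\<Sum>i<m. t (n + i) *\<^sub>R g i)" for t :: "nat \<Rightarrow> real"
  have gK: "g i \<in> K" if "i < m" for i
    using bij_betwE[OF g] BK(1) that by auto
  have hinj: "inj_on h {..<n}" using h by (simp add: bij_betw_def lessThan_atLeast0)
  have hsurj: "\<exists>i<n. h i = j" for j
  proof -
    have "j \<in> h ` {0..<n}" using h by (simp add: bij_betw_def)
    then show ?thesis by force
  qed
  have fstL: "fst (L t) = (\<Sum>i<n. t i *\<^sub>R (axis (h i) 1 :: real^'n))" for t
  proof -
    have fg: "fst (g i) = 0" if "i < m" for i using gK[OF that] by (simp add: K_def)
    have "fst (\<Sum>i<m. t (n + i) *\<^sub>R g i) = 0"
      by (simp add: fst_sum fg)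
    then show ?thesis by (simp add: L_def fst_sum A)
  qed
  have Lcomp: "fst (L t) $ h i = t i" if "i < n" for t i
    using fstL sum_axis_comp[OF hinj that] by simp
  have LC: "L t \<in> quadC \<longleftrightarrow> (\<forall>i<n. 0 \<le> t i)" for t
  proof
    assume "L t \<in> quadC"
    then show "\<forall>i<n. 0 \<le> t i" using Lcomp by (metis CN)
  next
    assume H: "\<forall>i<n. 0 \<le> t i"
    have "0 \<le> fst (L t) $ j" for j
    proof -
      obtain i where "i < n" "h i = j" using hsurj by blast
      then show ?thesis using H Lcomp by metis
    qed
    then show "L t \<in> quadC" by (simp add: CN)
  qed
  have LN: "L t \<in> N" for t
    unfolding L_def using gK A(1) assms(2)
    by (intro subspace_add subspace_sum subspace_scale) (auto simp: K_def)
  have Ladd: "L (\<lambda>i. s i + t i) = L s + L t" for s t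
    by (simp add: L_def scaleR_add_left sum.distrib)
  have Lscale: "L (\<lambda>i. a * t i) = a *\<^sub>R L t" for a t
    by (simp add: L_def scaleR_add_right scaleR_sum_right)
  have Lsurj: "N \<subseteq> L ` Rd (n + m)"
  proof
    fix a assume aN: "a \<in> N"
    define x where "x = fst a"
    define b where "b = a - (\<Sum>i<n. x $ h i *\<^sub>R A (h i))"
    have bN: "b \<in> N" unfolding b_def using aN A(1) assms(2)
      by (intro subspace_diff subspace_sum subspace_scale) auto
    have "fst b = x - (\<Sum>i<n. x $ h i *\<^sub>R (axis (h i) 1 :: real^'n))"
      by (simp add: b_def x_def fst_sum A)
    also have "(\<Sum>i<n. x $ h i *\<^sub>R (axis (h i) 1 :: real^'n)) = x"
    proof -
      have "(\<Sum>i<n. x $ h i *\<^sub>R (axis (h i) 1 :: real^'n)) $ h i = x $ h i" if "i < n" for i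
        using sum_axis_comp[OF hinj that] by simp
      note X = this
      show ?thesis
      proof (rule vec_eq_iff[THEN iffD2], rule allI)
        fix j obtain i where "i < n" "h i = j" using hsurj by blast
        then show "(\<Sum>i<n. x $ h i *\<^sub>R (axis (h i) 1 :: real^'n)) $ j = x $ j" using X by blast
      qed
    qed
    finally have "fst b = 0" by simp
    with bN have "b \<in> span BK" using BK(3) by (auto simp: K_def)
    then obtain u where u: "b = (\<Sum>v\<in>BK. u v *\<^sub>R v)" using span_finite[OF finBK] by blast
    have u2: "b = (\<Sum>i<m. u (g i) *\<^sub>R g i)"
      using u sum.reindex_bij_betw[OF g, of "\<lambda>v. u v *\<^sub>R v"] by (simp add: lessThan_atLeast0)
    define t where "t i = (if i < n then x $ h i else if i < n + m then u (g (i - n)) else 0)" for i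
    have "t \<in> Rd (n + m)" by (simp add: Rd_def t_def)
    moreover have "L t = a"
    proof -
      have "(\<Sum>i<n. t i *\<^sub>R A (h i)) = (\<Sum>i<n. x $ h i *\<^sub>R A (h i))"
        by (rule sum.cong) (auto simp: t_def)
      moreover have "(\<Sum>i<m. t (n + i) *\<^sub>R g i) = (\<Sum>i<m. u (g i) *\<^sub>R g i)"
        by (rule sum.cong) (auto simp: t_def)
      moreover have "a = (\<Sum>i<n. x $ h i *\<^sub>R A (h i)) + (\<Sum>i<m. u (g i) *\<^sub>R g i)"
        using u2 unfolding b_def diff_eq_eq by (simp add: add.commute)
      ultimately show ?thesis unfolding L_def by simp
    qed
    ultimately show "a \<in> L ` Rd (n + m)" by blast
  qed
  have Linj: "inj_on L (Rd (n + m))"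
  proof (rule inj_onI)
    fix s t assume s: "s \<in> Rd (n + m)" and t: "t \<in> Rd (n + m)" and eq: "L s = L t"
    define w where "w i = s i - t i" for i
    have "L w = L s - L t"
      by (simp add: L_def w_def scaleR_diff_left sum_subtractf algebra_simps)
    then have Lw: "L w = 0" using eq by simp
    have w1: "w i = 0" if "i < n" for i using Lcomp[OF that, of w] Lw by simp
    have "(\<Sum>i<n. w i *\<^sub>R A (h i)) = 0" by (simp add: w1)
    then have "(\<Sum>i<m. w (n + i) *\<^sub>R g i) = 0" using Lw by (simp add: L_def)
    moreover define c where "c v = w (n + inv_into {0..<m} g v)" for v
    ultimately have "(\<Sum>v\<in>BK. c v *\<^sub>R v) = 0"
      using sum.reindex_bij_betw[OF g, of "\<lambda>v. c v *\<^sub>R v"] g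
      by (simp add: c_def lessThan_atLeast0 bij_betw_inv_into_left)
    then have c0: "\<forall>v\<in>BK. c v = 0" using BK(2) dependent_finite[OF finBK] by blast
    have w2: "w (n + i) = 0" if "i < m" for i
    proof -
      have "g i \<in> BK" using g that by (auto simp: bij_betw_def)
      then show ?thesis using c0 g that by (auto simp: c_def bij_betw_inv_into_left)
    qed
    have "w i = 0" for i
    proof (cases "i < n")
      case True then show ?thesis by (rule w1)
    next
      case False
      show ?thesis
      proof (cases "i < n + m")
        case True then show ?thesis using w2[of "i - n"] False by simp
      next
        case F2: False then show ?thesis using s t by (simp add: w_def Rd_def)
      qed
    qed
    then show "s = t" by (auto simp: w_def)
  qed
  have pq: "partial_quadrant N (quadC \<inter> N)"
    unfolding partial_quadrant_def
  proof (intro exI conjI ballI allI)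
    show "n \<le> n + m" by simp
    show "L (\<lambda>i. s i + t i) = L s + L t" for s t by (rule Ladd)
    show "L (\<lambda>i. a * t i) = a *\<^sub>R L t" for a t by (rule Lscale)
    show "inj_on L (Rd (n + m))" by (rule Linj)
    show "L ` Rd (n + m) = N" using Lsurj LN by blast
    show "L ` {t \<in> Rd (n + m). \<forall>i<n. 0 \<le> t i} = quadC \<inter> N"
    proof
      show "L ` {t \<in> Rd (n + m). \<forall>i<n. 0 \<le> t i} \<subseteq> quadC \<inter> N" using LC LN by auto
      show "quadC \<inter> N \<subseteq> L ` {t \<in> Rd (n + m). \<forall>i<n. 0 \<le> t i}"
      proof
        fix a assume a: "a \<in> quadC \<inter> N"
        then obtain t where "t \<in> Rd (n + m)" "a = L t" using Lsurj by blast
        then show "a \<in> L ` {t \<in> Rd (n + m). \<forall>i<n. 0 \<le> t i}" using a LC by blast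
      qed
    qed
  qed
  show ?thesis using gp pq by blast
qed

end
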